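(* Consider a multi-sender single-uniprior index-coding instance with binary messages, information-flow graph $\mathcal{G}$ and message graph $\mathcal{U}$, and let $\mathcal{V}_S$ be the vertex set of a message-disconnected leaf SCC of $\mathcal{G}$. Form $(\mathcal{G}',\mathcal{U}')$ by appending this leaf SCC: add a new dummy vertex $n+1$ to both $\mathcal{G}$ and $\mathcal{U}$ (isolated in $\mathcal{U}'$), representing a receiver whose prior message $x_{n+1}$ is the constant $0$ (known to all receivers and never transmitted), and add an arc $(v\to n+1)$ in $\mathcal{G}$ for an arbitrarily chosen $v\in\mathcal{V}_S$ (so the dummy receiver requests $x_v$); the senders are unchanged. Then \[ N_{\mathrm{SCC}}(\mathcal{G}') = N_{\mathrm{SCC}}(\mathcal{G})-1,\qquad \tilde{\ell}^*(\mathcal{G}',\mathcal{U}')=\tilde{\ell}^*(\mathcal{G},\mathcal{U}),\qquad V_{\mathrm{out}}(\mathcal{G}')=V_{\mathrm{out}}(\mathcal{G}), \] where $N_{\mathrm{SCC}}(\cdot)$ denotes the number of leaf SCCs.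
   Context: Multi-sender single-uniprior index coding with binary messages: there are $n$ receivers and $n$ independent messages $x_1,\dots,x_n$, each a single bit uniformly distributed on $\{0,1\}$. Receiver $i$ knows $x_i$ a priori and requests a set of messages not containing $x_i$. The information-flow graph is the directed graph $\mathcal{G}=(\mathcal{V},\mathcal{A})$, $\mathcal{V}=\{1,\dots,n\}$, with an arc $(j\to i)$ iff receiver $i$ requests $x_j$. There are $S$ senders; sender $s$ knows a subset $\mathcal{M}_s$ of the messages, and every message is known to some sender. An index code consists of, for each sender $s$, an encoding function mapping the messages in $\mathcal{M}_s$ to $\ell_s$ bits, and for each receiver $i$ a decoding function that, from all senders' outputs together with its prior message, returns every message requested by $i$, for all message values; its length is $\sum_s \ell_s$. $\tilde{\ell}^*(\mathcal{G},\mathcal{U})$ is the minimum length of an index code for the instance. The message graph $\mathcal{U}$ is the undirected graph on $\mathcal{V}$ with an edge $\{i,j\}$ iff some sender knows both $x_i$ and $x_j$. A leaf vertex of $\mathcal{G}$ has no outgoing arcs; $V_{\mathrm{out}}(\mathcal{G})$ is the number of non-leaf vertices. A leaf SCC of $\mathcal{G}$ is a strongly connected component with at least two vertices and no arc from it to a vertex outside it. A leaf SCC with vertex set $\mathcal{V}_S$ is message-disconnected iff there are two vertices in $\mathcal{V}_S$ that are not joined by any path in $\mathcal{U}$. *)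

theory Defs
  imports Main
begin

text \<open>Receivers/messages are the naturals in V (V = {1..n} in the paper).
  Arcs: (j, i) \<in> A iff receiver i requests message x_j.
  Senders are indexed by s < S; sender s knows the message set M s.\<close>

definition wf_instance :: "nat \<Rightarrow> (nat \<times> nat) set \<Rightarrow> nat \<Rightarrow> (nat \<Rightarrow> nat set) \<Rightarrow> bool" where
  "wf_instance n A S M \<longleftrightarrow>
     A \<subseteq> {1..n} \<times> {1..n} \<and> (\<forall>i. (i, i) \<notin> A) \<and>
     (\<forall>s<S. M s \<subseteq> {1..n}) \<and> (\<forall>j\<in>{1..n}. \<exists>s<S. j \<in> M s)"

definition is_scc :: "nat set \<Rightarrow> (nat \<times> nat) set \<Rightarrow> nat set \<Rightarrow> bool" where
  "is_scc V A C \<longleftrightarrow> C \<noteq> {} \<and> C \<subseteq> V \<and>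
     (\<forall>u\<in>C. \<forall>w\<in>C. (u, w) \<in> A\<^sup>*) \<and>
     (\<forall>u\<in>C. \<forall>w\<in>V. (u, w) \<in> A\<^sup>* \<and> (w, u) \<in> A\<^sup>* \<longrightarrow> w \<in> C)"

definition leaf_scc :: "nat set \<Rightarrow> (nat \<times> nat) set \<Rightarrow> nat set \<Rightarrow> bool" where
  "leaf_scc V A C \<longleftrightarrow> is_scc V A C \<and> card C \<ge> 2 \<and>
     (\<forall>u\<in>C. \<forall>w. (u, w) \<in> A \<longrightarrow> w \<in> C)"

definition N_SCC :: "nat set \<Rightarrow> (nat \<times> nat) set \<Rightarrow> nat" where
  "N_SCC V A = card {C. leaf_scc V A C}"

definition V_out :: "nat set \<Rightarrow> (nat \<times> nat) set \<Rightarrow> nat" where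
  "V_out V A = card {i \<in> V. \<exists>j. (i, j) \<in> A}"

definition msg_edges :: "nat \<Rightarrow> (nat \<Rightarrow> nat set) \<Rightarrow> (nat \<times> nat) set" where
  "msg_edges S M = {(i, j). i \<noteq> j \<and> (\<exists>s<S. i \<in> M s \<and> j \<in> M s)}"

definition message_disconnected :: "nat \<Rightarrow> (nat \<Rightarrow> nat set) \<Rightarrow> nat set \<Rightarrow> bool" where
  "message_disconnected S M C \<longleftrightarrow> (\<exists>u\<in>C. \<exists>w\<in>C. (u, w) \<notin> (msg_edges S M)\<^sup>*)"

text \<open>Messages are x :: nat \<Rightarrow> bool; the messages
  indexed by D are dummy messages fixed to the constant 0 (False).\<close>
definition has_index_code ::
  "nat set \<Rightarrow> (nat \<times> nat) set \<Rightarrow> nat \<Rightarrow> (nat \<Rightarrow> nat set) \<Rightarrow> nat set \<Rightarrow> nat \<Rightarrow> bool" where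
  "has_index_code V A S M D L \<longleftrightarrow>
    (\<exists>(l :: nat \<Rightarrow> nat) (E :: nat \<Rightarrow> (nat \<Rightarrow> bool) \<Rightarrow> bool list)
       (Dec :: nat \<Rightarrow> nat \<Rightarrow> bool list list \<Rightarrow> bool \<Rightarrow> bool).
       (\<forall>s<S. \<forall>x y. (\<forall>j\<in>M s. x j = y j) \<longrightarrow> E s x = E s y) \<and>
       (\<forall>s<S. \<forall>x. length (E s x) = l s) \<and>
       (\<Sum>s<S. l s) = L \<and>
       (\<forall>i\<in>V. \<forall>j. (j, i) \<in> A \<longrightarrow>
          (\<forall>x. (\<forall>d\<in>D. x d = False) \<longrightarrow>
             Dec i j (map (\<lambda>s. E s x) [0..<S]) (x i) = x j)))"

definition ell_star ::
  "nat set \<Rightarrow> (nat \<times> nat) set \<Rightarrow> nat \<Rightarrow> (nat \<Rightarrow> nat set) \<Rightarrow> nat set \<Rightarrow> nat" where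
  "ell_star V A S M D = (LEAST L. has_index_code V A S M D L)"

end

theory Submission
  imports Defs
begin

lemma msg_sym: "sym ((msg_edges S M)\<^sup>*)"
  by (rule sym_rtrancl) (auto simp: sym_def msg_edges_def)

lemma crossing:
  assumes "(v, w) \<in> A\<^sup>*" "(v, w) \<notin> U\<^sup>*"
  shows "\<exists>a b. (v, a) \<in> A\<^sup>* \<and> (a, b) \<in> A \<and> (a, b) \<notin> U\<^sup>*"
  using assms
proof (induction rule: rtrancl_induct)
  case base then show ?case by simp
next
  case (step y z)
  show ?case
  proof (cases "(v, y) \<in> U\<^sup>*")
    case True
    then have "(y, z) \<notin> U\<^sup>*" using step(4) rtrancl_trans by fast
    then show ?thesis using step(1,2) by blast
  next
    case False then show ?thesis using step(3) by blast
  qed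
qed

lemma det_cross:
  fixes E :: "nat \<Rightarrow> (nat \<Rightarrow> bool) \<Rightarrow> bool list"
  assumes dep: "\<forall>s<S. \<forall>x y. (\<forall>j\<in>M s. x j = y j) \<longrightarrow> E s x = E s y"
    and dec: "\<forall>i\<in>{1..n}. \<forall>j. (j, i) \<in> A \<longrightarrow>
          (\<forall>x. (\<forall>d\<in>{}. x d = False) \<longrightarrow>
             Dec i j (map (\<lambda>s. E s x) [0..<S]) (x i) = x j)"
    and AV: "A \<subseteq> {1..n} \<times> {1..n}"
    and ab: "(a, b) \<in> A" "(a, b) \<notin> (msg_edges S M)\<^sup>*"
    and cw: "map (\<lambda>s. E s x) [0..<S] = map (\<lambda>s. E s y) [0..<S]"
  shows "x a = y a"
proof -
  let ?U = "(msg_edges S M)\<^sup>*"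
  define z where "z = (\<lambda>t. if (a, t) \<in> ?U then x t else y t)"
  have Exy: "E s x = E s y" if "s < S" for s
    using cw that by (metis (mono_tags, lifting) map_eq_conv atLeastLessThan_iff set_upt zero_le)
  have "E s z = E s y" if s: "s < S" for s
  proof (cases "\<exists>t\<in>M s. (a, t) \<in> ?U")
    case True
    then obtain t where t: "t \<in> M s" "(a, t) \<in> ?U" by blast
    have "\<forall>t'\<in>M s. (a, t') \<in> ?U"
    proof
      fix t' assume t': "t' \<in> M s"
      show "(a, t') \<in> ?U"
      proof (cases "t = t'")
        case True then show ?thesis using t by simp
      next
        case False
        then have "(t, t') \<in> msg_edges S M" using t t' s by (auto simp: msg_edges_def)
        then show ?thesis using t(2) by (meson rtrancl.rtrancl_into_rtrancl)
      qed
    qed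
    then have "\<forall>j\<in>M s. z j = x j" by (simp add: z_def)
    then have "E s z = E s x" using dep s by blast
    then show ?thesis using Exy s by simp
  next
    case False
    then have "\<forall>j\<in>M s. z j = y j" by (auto simp: z_def)
    then show ?thesis using dep s by blast
  qed
  then have cz: "map (\<lambda>s. E s z) [0..<S] = map (\<lambda>s. E s y) [0..<S]" by simp
  have b: "b \<in> {1..n}" using AV ab by auto
  have zb: "z b = y b" using ab by (simp add: z_def)
  have za: "z a = x a" by (simp add: z_def)
  have "Dec b a (map (\<lambda>s. E s z) [0..<S]) (z b) = z a" using dec b ab by blast
  moreover have "Dec b a (map (\<lambda>s. E s y) [0..<S]) (y b) = y a" using dec b ab by blast
  ultimately show ?thesis using cz zb za by simp
qed

lemma propagate:
  fixes E :: "nat \<Rightarrow> (nat \<Rightarrow> bool) \<Rightarrow> bool list"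
  assumes dec: "\<forall>i\<in>{1..n}. \<forall>j. (j, i) \<in> A \<longrightarrow>
          (\<forall>x. (\<forall>d\<in>{}. x d = False) \<longrightarrow>
             Dec i j (map (\<lambda>s. E s x) [0..<S]) (x i) = x j)"
    and AV: "A \<subseteq> {1..n} \<times> {1..n}"
    and pq: "(p, q) \<in> A\<^sup>*"
    and detq: "\<forall>x y. map (\<lambda>s. E s x) [0..<S] = map (\<lambda>s. E s y) [0..<S] \<longrightarrow> x q = y q"
  shows "\<forall>x y. map (\<lambda>s. E s x) [0..<S] = map (\<lambda>s. E s y) [0..<S] \<longrightarrow> x p = y p"
  using pq
proof (induction rule: converse_rtrancl_induct)
  case base then show ?case using detq by blast
next
  case (step p p')
  show ?case
  proof (intro allI impI)
    fix x y :: "nat \<Rightarrow> bool"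
    assume c: "map (\<lambda>s. E s x) [0..<S] = map (\<lambda>s. E s y) [0..<S]"
    have p': "p' \<in> {1..n}" using AV step(1) by auto
    have "x p' = y p'" using step(3) c by blast
    moreover have "Dec p' p (map (\<lambda>s. E s x) [0..<S]) (x p') = x p" using dec p' step(1) by blast
    moreover have "Dec p' p (map (\<lambda>s. E s y) [0..<S]) (y p') = y p" using dec p' step(1) by blast
    ultimately show "x p = y p" using c by simp
  qed
qed

lemma code_equiv:
  fixes n S :: nat and A :: "(nat \<times> nat) set" and M :: "nat \<Rightarrow> nat set"
    and C :: "nat set" and v :: nat
  assumes wf: "wf_instance n A S M"
    and lc: "leaf_scc {1..n} A C"
    and md: "message_disconnected S M C"
    and vC: "v \<in> C"
  shows "has_index_code {1..Suc n} (insert (v, Suc n) A) S M {Suc n} L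
     = has_index_code {1..n} A S M {} L"
proof
  have AV: "A \<subseteq> {1..n} \<times> {1..n}" and MV: "\<forall>s<S. M s \<subseteq> {1..n}"
    using wf by (auto simp: wf_instance_def)
  assume "has_index_code {1..Suc n} (insert (v, Suc n) A) S M {Suc n} L"
  then obtain l E Dec where dep: "\<forall>s<S. \<forall>x y. (\<forall>j\<in>M s. x j = y j) \<longrightarrow> (E :: nat \<Rightarrow> (nat \<Rightarrow> bool) \<Rightarrow> bool list) s x = E s y"
    and len: "\<forall>s<S. \<forall>x. length (E s x) = l s" and sum: "(\<Sum>s<S. l s) = L"
    and dec: "\<forall>i\<in>{1..Suc n}. \<forall>j. (j, i) \<in> insert (v, Suc n) A \<longrightarrow>
          (\<forall>x. (\<forall>d\<in>{Suc n}. x d = False) \<longrightarrow>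
             Dec i j (map (\<lambda>s. E s x) [0..<S]) (x i) = x j)"
    unfolding has_index_code_def by (elim exE conjE) (rule that)
  have "\<forall>i\<in>{1..n}. \<forall>j. (j, i) \<in> A \<longrightarrow>
          (\<forall>x. (\<forall>d\<in>{}. x d = False) \<longrightarrow>
             Dec i j (map (\<lambda>s. E s x) [0..<S]) (x i) = x j)"
  proof (intro ballI allI impI)
    fix i j x
    assume i: "i \<in> {1..n}" and ji: "(j, i) \<in> A"
    define x' where "x' = x(Suc n := False)"
    have j: "j \<in> {1..n}" using AV ji by auto
    have "E s x' = E s x" if "s < S" for s
      proof -
      have "\<forall>j\<in>M s. x' j = x j" using MV that unfolding x'_def by fastforce
      then show ?thesis using dep that by blast
    qed
    then have m: "map (\<lambda>s. E s x') [0..<S] = map (\<lambda>s. E s x) [0..<S]"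
      by (intro map_cong[OF refl]) (simp only: set_upt atLeastLessThan_iff)
    have i': "i \<in> {1..Suc n}" using i by simp
    have ji': "(j, i) \<in> insert (v, Suc n) A" using ji by simp
    have hx: "\<forall>d\<in>{Suc n}. x' d = False" by (simp add: x'_def)
    have D: "Dec i j (map (\<lambda>s. E s x') [0..<S]) (x' i) = x' j"
    proof -
      have "\<forall>x. (\<forall>d\<in>{Suc n}. x d = False) \<longrightarrow>
             Dec i j (map (\<lambda>s. E s x) [0..<S]) (x i) = x j" using dec i' ji' by blast
      then show ?thesis using hx by blast
    qed
    have "x' i = x i" "x' j = x j" using i j by (auto simp: x'_def)
    then show "Dec i j (map (\<lambda>s. E s x) [0..<S]) (x i) = x j"
      using D m by simp
  qed
  then show "has_index_code {1..n} A S M {} L"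
    unfolding has_index_code_def using dep len sum
    by (intro exI[of _ l] exI[of _ E] exI[of _ Dec] conjI)
next
  have AV: "A \<subseteq> {1..n} \<times> {1..n}"
    using wf by (auto simp: wf_instance_def)
  assume "has_index_code {1..n} A S M {} L"
  then obtain l E Dec where dep: "\<forall>s<S. \<forall>x y. (\<forall>j\<in>M s. x j = y j) \<longrightarrow> (E :: nat \<Rightarrow> (nat \<Rightarrow> bool) \<Rightarrow> bool list) s x = E s y"
    and len: "\<forall>s<S. \<forall>x. length (E s x) = l s" and sum: "(\<Sum>s<S. l s) = L"
    and dec: "\<forall>i\<in>{1..n}. \<forall>j. (j, i) \<in> A \<longrightarrow>
          (\<forall>x. (\<forall>d\<in>{}. x d = False) \<longrightarrow>
             Dec i j (map (\<lambda>s. E s x) [0..<S]) (x i) = x j)"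
    unfolding has_index_code_def by (elim exE conjE) (rule that)
  let ?U = "(msg_edges S M)\<^sup>*"
  obtain u w where uw: "u \<in> C" "w \<in> C" "(u, w) \<notin> ?U"
    using md by (auto simp: message_disconnected_def)
  obtain t where t: "t \<in> C" "(v, t) \<notin> ?U"
  proof (cases "(v, u) \<in> ?U")
    case True
    have "(v, w) \<notin> ?U"
    proof
      assume "(v, w) \<in> ?U"
      moreover have "(u, v) \<in> ?U" by (rule symD[OF msg_sym True])
      ultimately have "(u, w) \<in> ?U" by (meson rtrancl_trans)
      then show False using uw(3) by simp
    qed
    then show ?thesis by (rule that[OF uw(2)])
  next
    case False then show ?thesis by (rule that[OF uw(1)])
  qed
  have "\<forall>u\<in>C. \<forall>w\<in>C. (u, w) \<in> A\<^sup>*" using lc unfolding leaf_scc_def is_scc_def by blast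
  then have "(v, t) \<in> A\<^sup>*" using vC t(1) by blast
  from crossing[OF this t(2)] obtain a b where ab: "(v, a) \<in> A\<^sup>*" "(a, b) \<in> A" "(a, b) \<notin> ?U"
    by blast
  have deta: "\<forall>x y. map (\<lambda>s. E s x) [0..<S] = map (\<lambda>s. E s y) [0..<S] \<longrightarrow> x a = y a"
    by (intro allI impI) (rule det_cross[OF dep dec AV ab(2,3)])
  have detv: "\<forall>x y. map (\<lambda>s. E s x) [0..<S] = map (\<lambda>s. E s y) [0..<S] \<longrightarrow> x v = y v"
    using propagate[OF dec AV ab(1) deta] .
  define Dec' where "Dec' = (\<lambda>i j cw b. if i = Suc n
      then (SOME y. map (\<lambda>s. E s y) [0..<S] = cw) v else Dec i j cw b)"
  have "\<forall>i\<in>{1..Suc n}. \<forall>j. (j, i) \<in> insert (v, Suc n) A \<longrightarrow>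
          (\<forall>x. (\<forall>d\<in>{Suc n}. x d = False) \<longrightarrow>
             Dec' i j (map (\<lambda>s. E s x) [0..<S]) (x i) = x j)"
  proof (intro ballI allI impI)
    fix i j x
    assume i: "i \<in> {1..Suc n}" and ji: "(j, i) \<in> insert (v, Suc n) A"
    show "Dec' i j (map (\<lambda>s. E s x) [0..<S]) (x i) = x j"
    proof (cases "i = Suc n")
      case True
      then have "j = v" using ji AV by auto
      have "\<exists>y. map (\<lambda>s. E s y) [0..<S] = map (\<lambda>s. E s x) [0..<S]" by blast
      then have "map (\<lambda>s. E s (SOME y. map (\<lambda>s. E s y) [0..<S] = map (\<lambda>s. E s x) [0..<S])) [0..<S]
          = map (\<lambda>s. E s x) [0..<S]" by (rule someI_ex)
      then have "(SOME y. map (\<lambda>s. E s y) [0..<S] = map (\<lambda>s. E s x) [0..<S]) v = x v"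
        using detv by blast
      then show ?thesis using True \<open>j = v\<close> by (simp add: Dec'_def)
    next
      case False
      then have "i \<in> {1..n}" "(j, i) \<in> A" using i ji by auto
      then have "Dec i j (map (\<lambda>s. E s x) [0..<S]) (x i) = x j" using dec by blast
      then show ?thesis using False by (simp add: Dec'_def)
    qed
  qed
  then show "has_index_code {1..Suc n} (insert (v, Suc n) A) S M {Suc n} L"
    unfolding has_index_code_def using dep len sum
    by (intro exI[of _ l] exI[of _ E] exI[of _ Dec'] conjI)
qed

lemma leaf_unfold:
  "leaf_scc V A C \<longleftrightarrow> C \<noteq> {} \<and> C \<subseteq> V \<and> (\<forall>u\<in>C. \<forall>w\<in>C. (u, w) \<in> A\<^sup>*) \<and>
     (\<forall>u\<in>C. \<forall>w\<in>V. (u, w) \<in> A\<^sup>* \<and> (w, u) \<in> A\<^sup>* \<longrightarrow> w \<in> C) \<and> card C \<ge> 2 \<and>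
     (\<forall>u\<in>C. \<forall>w. (u, w) \<in> A \<longrightarrow> w \<in> C)"
  unfolding leaf_scc_def is_scc_def by blast

theorem proposition1:
  fixes n S :: nat and A :: "(nat \<times> nat) set" and M :: "nat \<Rightarrow> nat set"
    and C :: "nat set" and v :: nat
  assumes "wf_instance n A S M"
    and "leaf_scc {1..n} A C"
    and "message_disconnected S M C"
    and "v \<in> C"
  shows "N_SCC {1..Suc n} (insert (v, Suc n) A) = N_SCC {1..n} A - 1
    \<and> ell_star {1..Suc n} (insert (v, Suc n) A) S M {Suc n} = ell_star {1..n} A S M {}
    \<and> V_out {1..Suc n} (insert (v, Suc n) A) = V_out {1..n} A"
proof (intro conjI)
  show "ell_star {1..Suc n} (insert (v, Suc n) A) S M {Suc n} = ell_star {1..n} A S M {}"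
  proof -
    have "has_index_code {1..Suc n} (insert (v, Suc n) A) S M {Suc n} = has_index_code {1..n} A S M {}"
      by (rule ext) (rule code_equiv[OF assms])
    then show ?thesis unfolding ell_star_def by simp
  qed
  have AV: "A \<subseteq> {1..n} \<times> {1..n}" using assms(1) unfolding wf_instance_def by blast
  have lc: "leaf_scc {1..n} A C" by fact
  note L0 = lc[unfolded leaf_unfold]
  have vn: "v \<in> {1..n}" using L0 assms(4) by blast
  have vsn: "v \<noteq> Suc n" using vn by simp
  let ?A' = "insert (v, Suc n) A"
  have AsnD: "a \<noteq> Suc n" "b \<noteq> Suc n" if "(a, b) \<in> A" for a b
    using AV that by auto
  have F1: "(p, q) \<in> A\<^sup>*" if "(p, q) \<in> ?A'\<^sup>*" "q \<noteq> Suc n" for p q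
    using that
  proof (induction rule: rtrancl_induct)
    case base then show ?case by simp
  next
    case (step y z)
    then have yz: "(y, z) \<in> A" by blast
    then have "y \<noteq> Suc n" by (rule AsnD)
    then have "(p, y) \<in> A\<^sup>*" using step.IH by blast
    then show ?case using yz by (rule rtrancl.rtrancl_into_rtrancl)
  qed
  have F2: "q = Suc n" if "(Suc n, q) \<in> ?A'\<^sup>*" for q
    using that
  proof (induction rule: rtrancl_induct)
    case base then show ?case by simp
  next
    case (step y z)
    then have "(Suc n, z) \<in> ?A'" by simp
    then have "(Suc n, z) \<in> A" using vsn by simp
    then show ?case using AsnD by blast
  qed
  have mono: "A\<^sup>* \<subseteq> ?A'\<^sup>*" by (rule rtrancl_mono) blast
  obtain w where w: "w \<in> C" "w \<noteq> v"
  proof -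
    have "\<not> C \<subseteq> {v}"
    proof
      assume "C \<subseteq> {v}"
      then have "card C \<le> card {v}" by (intro card_mono) auto
      then show False using L0 by simp
    qed
    then show ?thesis using that by blast
  qed
  have "(v, w) \<in> A\<^sup>*" using L0 assms(4) w by blast
  then obtain y where vy: "(v, y) \<in> A" using w(2) by (metis converse_rtranclE)
  show "V_out {1..Suc n} ?A' = V_out {1..n} A"
  proof -
    have "{i \<in> {1..Suc n}. \<exists>j. (i, j) \<in> ?A'} = {i \<in> {1..n}. \<exists>j. (i, j) \<in> A}"
    proof (intro equalityI subsetI)
      fix i assume "i \<in> {i \<in> {1..Suc n}. \<exists>j. (i, j) \<in> ?A'}"
      then obtain j where j: "(i, j) \<in> ?A'" by blast
      show "i \<in> {i \<in> {1..n}. \<exists>j. (i, j) \<in> A}"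
      proof (cases "i = v")
        case True then show ?thesis using vn vy by blast
      next
        case False then have "(i, j) \<in> A" using j by simp
        then show ?thesis using AV by blast
      qed
    next
      fix i assume "i \<in> {i \<in> {1..n}. \<exists>j. (i, j) \<in> A}"
      then show "i \<in> {i \<in> {1..Suc n}. \<exists>j. (i, j) \<in> ?A'}" by auto
    qed
    then show ?thesis by (simp add: V_out_def)
  qed
  have same: "C' = C" if "leaf_scc {1..n} A C'" "v \<in> C'" for C'
  proof -
    note L1 = that(1)[unfolded leaf_unfold]
    show ?thesis
    proof
      show "C' \<subseteq> C"
      proof
        fix x assume x: "x \<in> C'"
        have "(v, x) \<in> A\<^sup>*" "(x, v) \<in> A\<^sup>*" "x \<in> {1..n}" using L1 that(2) x by blast+
        then show "x \<in> C" using L0 assms(4) by blast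
      qed
    next
      show "C \<subseteq> C'"
      proof
        fix x assume x: "x \<in> C"
        have "(v, x) \<in> A\<^sup>*" "(x, v) \<in> A\<^sup>*" "x \<in> {1..n}" using L0 assms(4) x by blast+
        then show "x \<in> C'" using L1 that(2) by blast
      qed
    qed
  qed
  have eq: "{C'. leaf_scc {1..Suc n} ?A' C'} = {C'. leaf_scc {1..n} A C'} - {C}"
  proof (intro equalityI subsetI)
    fix C' assume "C' \<in> {C'. leaf_scc {1..Suc n} ?A' C'}"
    then have L: "leaf_scc {1..Suc n} ?A' C'" by simp
    note L1 = L[unfolded leaf_unfold]
    have nC: "Suc n \<notin> C'"
    proof
      assume sn: "Suc n \<in> C'"
      have "C' \<subseteq> {Suc n}"
      proof
        fix x assume "x \<in> C'"
        then have "(Suc n, x) \<in> ?A'\<^sup>*" using L1 sn by blast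
        then show "x \<in> {Suc n}" using F2 by blast
      qed
      then have "card C' \<le> card {Suc n}" by (intro card_mono) auto
      then show False using L1 by simp
    qed
    have sub: "C' \<subseteq> {1..n}"
    proof
      fix x assume "x \<in> C'"
      then have "x \<in> {1..Suc n}" "x \<noteq> Suc n" using L1 nC by blast+
      then show "x \<in> {1..n}" by simp
    qed
    have "C' \<noteq> C"
    proof
      assume "C' = C"
      then have "v \<in> C'" using assms(4) by simp
      then have "Suc n \<in> C'" using L1 by blast
      then show False using nC by simp
    qed
    moreover have "leaf_scc {1..n} A C'"
      unfolding leaf_unfold
    proof (intro conjI ballI allI impI)
      show "C' \<noteq> {}" "card C' \<ge> 2" using L1 by blast+
      show "C' \<subseteq> {1..n}" by fact
      fix u assume u: "u \<in> C'"
      { fix w assume "w \<in> C'"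
        then have "(u, w) \<in> ?A'\<^sup>*" "w \<noteq> Suc n" using L1 u nC by blast+
        then show "(u, w) \<in> A\<^sup>*" by (rule F1) }
      { fix w assume "w \<in> {1..n}" "(u, w) \<in> A\<^sup>* \<and> (w, u) \<in> A\<^sup>*"
        then have "w \<in> {1..Suc n}" "(u, w) \<in> ?A'\<^sup>*" "(w, u) \<in> ?A'\<^sup>*" using mono by auto
        then show "w \<in> C'" using L1 u by blast }
      { fix w assume "(u, w) \<in> A"
        then have "(u, w) \<in> ?A'" by simp
        then show "w \<in> C'" using L1 u by blast }
    qed
    ultimately show "C' \<in> {C'. leaf_scc {1..n} A C'} - {C}" by simp
  next
    fix C' assume "C' \<in> {C'. leaf_scc {1..n} A C'} - {C}"
    then have L: "leaf_scc {1..n} A C'" and ne: "C' \<noteq> C" by auto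
    note L1 = L[unfolded leaf_unfold]
    have sub: "C' \<subseteq> {1..n}" using L1 by blast
    have "leaf_scc {1..Suc n} ?A' C'"
      unfolding leaf_unfold
    proof (intro conjI ballI allI impI)
      show "C' \<noteq> {}" "card C' \<ge> 2" using L1 by blast+
      show "C' \<subseteq> {1..Suc n}" using sub by auto
      fix u assume u: "u \<in> C'"
      have un: "u \<noteq> Suc n" using u sub by auto
      { fix w assume "w \<in> C'"
        then have "(u, w) \<in> A\<^sup>*" using L1 u by blast
        then show "(u, w) \<in> ?A'\<^sup>*" using mono by blast }
      { fix w assume w: "w \<in> {1..Suc n}" "(u, w) \<in> ?A'\<^sup>* \<and> (w, u) \<in> ?A'\<^sup>*"
        have wn: "w \<noteq> Suc n"
        proof
          assume "w = Suc n"
          then have "u = Suc n" using w F2 by blast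
          then show False using un by simp
        qed
        have "(u, w) \<in> A\<^sup>*" using w wn by (blast intro: F1)
        moreover have "(w, u) \<in> A\<^sup>*" using w un by (blast intro: F1)
        moreover have "w \<in> {1..n}" using w wn by auto
        ultimately show "w \<in> C'" using L1 u by blast }
      { fix w assume uw: "(u, w) \<in> ?A'"
        show "w \<in> C'"
        proof (cases "(u, w) = (v, Suc n)")
          case True
          then have "v \<in> C'" using u by simp
          then show ?thesis using same L ne by blast
        next
          case False
          then have "(u, w) \<in> A" using uw by auto
          then show ?thesis using L1 u by blast
        qed }
    qed
    then show "C' \<in> {C'. leaf_scc {1..Suc n} ?A' C'}" by simp
  qed
  have fin: "finite {C'. leaf_scc {1..n} A C'}"
  proof (rule finite_subset[of _ "Pow {1..n}"])
    show "{C'. leaf_scc {1..n} A C'} \<subseteq> Pow {1..n}" unfolding leaf_unfold by blast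
  qed simp
  show "N_SCC {1..Suc n} ?A' = N_SCC {1..n} A - 1"
    unfolding N_SCC_def eq using fin lc by (simp add: card_Diff_singleton)
qed

end
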